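(* Let $F:\mathbb{R}\to\mathbb{R}$ and $G:\mathbb{R}\to(0,\infty)$ be measurable functions and fix a timestep $\Delta t>0$. Define the Euler–Maruyama transition density $$P(\xi\mid x)=\frac{1}{G(x)\sqrt{2\pi\Delta t}}\exp\!\left(\frac{-[\xi-x-F(x)\Delta t]^2}{2G(x)^2\Delta t}\right),\qquad \xi,x\in\mathbb{R},$$ i.e. the density of $\xi=x+F(x)\Delta t+G(x)\eta\sqrt{\Delta t}$ with $\eta\sim N(0,1)$. Suppose $\rho^*$ is a probability density on $\mathbb{R}$ which is an equilibrium of this step, i.e. $$\rho^*(\xi)=\int_{-\infty}^{\infty}P(\xi\mid x)\,\rho^*(x)\,dx\quad\text{for all }\xi\in\mathbb{R},$$ and suppose its second raw moment $\mu_2=\int_{-\infty}^{\infty}x^2\rho^*(x)\,dx$ is finite. Then $$0=\Delta t\int_{-\infty}^{\infty}\rho^*(x)\left[2xF(x)+G(x)^2\right]dx+\Delta t^2\int_{-\infty}^{\infty}\rho^*(x)\,F(x)^2\,dx .$$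
   Context: This is the Euler–Maruyama discretization with timestep $\Delta t$ of the autonomous Itô SDE $dx=F(x)\,dt+G(x)\,dW$; the equilibrium $\rho^*$ is a density left unchanged by one step of this discretization. *)

theory Defs
  imports "HOL-Analysis.Analysis"
begin

definition EM_density :: "(real \<Rightarrow> real) \<Rightarrow> (real \<Rightarrow> real) \<Rightarrow> real \<Rightarrow> real \<Rightarrow> real \<Rightarrow> real" where
  "EM_density F G dt \<xi> x =
     1 / (G x * sqrt (2 * pi * dt)) * exp (- ((\<xi> - x - F x * dt)\<^sup>2) / (2 * (G x)\<^sup>2 * dt))"

end

theory Submission
  imports Defs "HOL-Probability.Probability"
begin


lemma normal_second:
  assumes s: "(0::real) < \<sigma>"
  shows "has_bochner_integral lborel (\<lambda>x. normal_density \<mu> \<sigma> x * x\<^sup>2) (\<sigma>\<^sup>2 + \<mu>\<^sup>2)"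
proof -
  have a: "has_bochner_integral lborel (\<lambda>x. normal_density \<mu> \<sigma> x * (x - \<mu>) ^ (2 * 1)) (\<sigma>\<^sup>2)"
    using normal_moment_even[OF s, where k=1 and \<mu>=\<mu>] by (simp add: power2_eq_square)
  have b: "has_bochner_integral lborel (\<lambda>x. normal_density \<mu> \<sigma> x * (x - \<mu>) ^ (2 * 0 + 1)) 0"
    using normal_moment_odd[OF s, where k=0 and \<mu>=\<mu>] .
  have c: "has_bochner_integral lborel (\<lambda>x. normal_density \<mu> \<sigma> x) 1"
    using normal_moment_even[OF s, where k=0 and \<mu>=\<mu>] by simp
  have "has_bochner_integral lborel (\<lambda>x. normal_density \<mu> \<sigma> x * (x - \<mu>) ^ (2 * 1)
     + (2*\<mu>) * (normal_density \<mu> \<sigma> x * (x - \<mu>) ^ (2 * 0 + 1)) + \<mu>\<^sup>2 * normal_density \<mu> \<sigma> x)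
     (\<sigma>\<^sup>2 + (2*\<mu>) * 0 + \<mu>\<^sup>2 * 1)"
    by (intro has_bochner_integral_add has_bochner_integral_mult_right a b c)
  moreover have "(\<lambda>x. normal_density \<mu> \<sigma> x * (x - \<mu>) ^ (2 * 1)
     + (2*\<mu>) * (normal_density \<mu> \<sigma> x * (x - \<mu>) ^ (2 * 0 + 1)) + \<mu>\<^sup>2 * normal_density \<mu> \<sigma> x)
     = (\<lambda>x. normal_density \<mu> \<sigma> x * x\<^sup>2)"
    by (auto simp: fun_eq_iff power2_eq_square algebra_simps)
  ultimately show ?thesis by simp
qed

lemma normal_second_nn:
  assumes s: "(0::real) < \<sigma>"
  shows "(\<integral>\<^sup>+x. ennreal (normal_density \<mu> \<sigma> x * x\<^sup>2) \<partial>lborel) = ennreal (\<sigma>\<^sup>2 + \<mu>\<^sup>2)"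
proof -
  note h = normal_second[OF s, of \<mu>]
  have "(\<integral>\<^sup>+x. ennreal (normal_density \<mu> \<sigma> x * x\<^sup>2) \<partial>lborel) = ennreal (integral\<^sup>L lborel (\<lambda>x. normal_density \<mu> \<sigma> x * x\<^sup>2))"
    by (rule nn_integral_eq_integral) (use integrable.intros[OF h] in auto)
  with h show ?thesis by (simp add: has_bochner_integral_integral_eq)
qed

lemma EM_normal:
  assumes "G x > 0" "dt > 0"
  shows "EM_density F G dt \<xi> x = normal_density (x + F x * dt) (G x * sqrt dt) \<xi>"
  using assms unfolding EM_density_def normal_density_def
  by (simp add: power_mult_distrib real_sqrt_mult algebra_simps)


theorem mainTheorem1:
  fixes F G \<rho> :: "real \<Rightarrow> real" and dt :: real
  assumes F_meas: "F \<in> borel_measurable borel"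
    and G_meas: "G \<in> borel_measurable borel"
    and G_pos: "\<And>x. G x > 0"
    and dt_pos: "dt > 0"
    and rho_meas: "\<rho> \<in> borel_measurable borel"
    and rho_nonneg: "\<And>x. \<rho> x \<ge> 0"
    and rho_prob: "(\<integral>\<^sup>+ x. ennreal (\<rho> x) \<partial>lborel) = 1"
    and equilibrium: "\<And>\<xi>. ennreal (\<rho> \<xi>) = (\<integral>\<^sup>+ x. ennreal (EM_density F G dt \<xi> x * \<rho> x) \<partial>lborel)"
    and moment2: "integrable lborel (\<lambda>x. x\<^sup>2 * \<rho> x)"
  shows "0 = dt * (\<integral> x. \<rho> x * (2 * x * F x + (G x)\<^sup>2) \<partial>lborel)
             + dt\<^sup>2 * (\<integral> x. \<rho> x * (F x)\<^sup>2 \<partial>lborel)"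
proof -
  define m where "m x = (x + F x * dt)\<^sup>2 + (G x)\<^sup>2 * dt" for x
  have [measurable]: "F \<in> borel_measurable lborel" "G \<in> borel_measurable lborel" "\<rho> \<in> borel_measurable lborel"
    using F_meas G_meas rho_meas by auto
  have m_meas[measurable]: "m \<in> borel_measurable lborel" unfolding m_def by measurable
  have m_nn: "m x \<ge> 0" for x unfolding m_def using dt_pos by auto
  have EMn: "EM_density F G dt \<xi> x = normal_density (x + F x * dt) (G x * sqrt dt) \<xi>" for \<xi> x
    by (rule EM_normal[where G=G and x=x, OF G_pos dt_pos])
  have K1: "(\<integral>\<^sup>+\<xi>. ennreal (\<xi>\<^sup>2 * EM_density F G dt \<xi> x) \<partial>lborel) = ennreal (m x)" for x
  proof -
    have s: "0 < G x * sqrt dt" using G_pos[of x] dt_pos by auto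
    have "(\<integral>\<^sup>+\<xi>. ennreal (\<xi>\<^sup>2 * EM_density F G dt \<xi> x) \<partial>lborel)
        = (\<integral>\<^sup>+\<xi>. ennreal (normal_density (x + F x * dt) (G x * sqrt dt) \<xi> * \<xi>\<^sup>2) \<partial>lborel)"
      by (simp add: EMn mult.commute)
    also have "\<dots> = ennreal ((G x * sqrt dt)\<^sup>2 + (x + F x * dt)\<^sup>2)"
      by (rule normal_second_nn[OF s])
    also have "\<dots> = ennreal (m x)" unfolding m_def using dt_pos
      by (simp add: power_mult_distrib)
    finally show ?thesis .
  qed
  have EMnn: "EM_density F G dt \<xi> x \<ge> 0" for \<xi> x
    by (simp add: EMn)
  have K2: "(\<integral>\<^sup>+\<xi>. ennreal (\<xi>\<^sup>2 * \<rho> \<xi>) \<partial>lborel) = (\<integral>\<^sup>+x. ennreal (\<rho> x * m x) \<partial>lborel)"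
  proof -
    have "(\<integral>\<^sup>+\<xi>. ennreal (\<xi>\<^sup>2 * \<rho> \<xi>) \<partial>lborel) = (\<integral>\<^sup>+\<xi>. ennreal (\<xi>\<^sup>2) * ennreal (\<rho> \<xi>) \<partial>lborel)"
      by (intro nn_integral_cong) (simp add: ennreal_mult rho_nonneg)
    also have "\<dots> = (\<integral>\<^sup>+\<xi>. (\<integral>\<^sup>+x. ennreal (\<xi>\<^sup>2) * ennreal (EM_density F G dt \<xi> x * \<rho> x) \<partial>lborel) \<partial>lborel)"
      apply (subst equilibrium)
      apply (intro nn_integral_cong)
      apply (rule nn_integral_cmult[symmetric])
      by (unfold EM_density_def, measurable)
    also have "\<dots> = (\<integral>\<^sup>+\<xi>. (\<integral>\<^sup>+x. (\<lambda>(x,\<xi>). ennreal (\<xi>\<^sup>2 * EM_density F G dt \<xi> x * \<rho> x)) (x,\<xi>) \<partial>lborel) \<partial>lborel)"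
      by (simp add: ennreal_mult' mult.assoc)
    also have "\<dots> = (\<integral>\<^sup>+x. (\<integral>\<^sup>+\<xi>. (\<lambda>(x,\<xi>). ennreal (\<xi>\<^sup>2 * EM_density F G dt \<xi> x * \<rho> x)) (x,\<xi>) \<partial>lborel) \<partial>lborel)"
      by (rule lborel_pair.Fubini) (unfold EM_density_def, measurable)
    also have "\<dots> = (\<integral>\<^sup>+x. ennreal (\<rho> x) * (\<integral>\<^sup>+\<xi>. ennreal (\<xi>\<^sup>2 * EM_density F G dt \<xi> x) \<partial>lborel) \<partial>lborel)"
      apply (subst nn_integral_cmult[symmetric])
       apply (unfold EM_density_def, measurable)[1]
      apply (intro nn_integral_cong)
      by (simp add: ennreal_mult'[symmetric] rho_nonneg EMnn mult.commute mult.left_commute)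
    also have "\<dots> = (\<integral>\<^sup>+x. ennreal (\<rho> x * m x) \<partial>lborel)"
      by (simp add: K1, intro nn_integral_cong) (simp add: ennreal_mult rho_nonneg m_nn)
    finally show ?thesis .
  qed
  have fin: "(\<integral>\<^sup>+\<xi>. ennreal (\<xi>\<^sup>2 * \<rho> \<xi>) \<partial>lborel) = ennreal (\<integral>\<xi>. \<xi>\<^sup>2 * \<rho> \<xi> \<partial>lborel)"
    by (rule nn_integral_eq_integral[OF moment2]) (simp add: rho_nonneg)
  have Im: "integrable lborel (\<lambda>x. \<rho> x * m x)"
  proof (rule integrableI_bounded)
    show "(\<lambda>x. \<rho> x * m x) \<in> borel_measurable lborel" by measurable
    have "(\<integral>\<^sup>+x. ennreal (norm (\<rho> x * m x)) \<partial>lborel) = (\<integral>\<^sup>+x. ennreal (\<rho> x * m x) \<partial>lborel)"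
      by (intro nn_integral_cong) (simp add: rho_nonneg m_nn)
    also have "\<dots> < \<infinity>" using K2 fin by (metis ennreal_less_top infinity_ennreal_def)
    finally show "(\<integral>\<^sup>+x. ennreal (norm (\<rho> x * m x)) \<partial>lborel) < \<infinity>" .
  qed
  have eqI: "(\<integral>x. x\<^sup>2 * \<rho> x \<partial>lborel) = (\<integral>x. \<rho> x * m x \<partial>lborel)"
  proof -
    have "ennreal (\<integral>x. x\<^sup>2 * \<rho> x \<partial>lborel) = ennreal (\<integral>x. \<rho> x * m x \<partial>lborel)"
      using K2 fin nn_integral_eq_integral[OF Im] rho_nonneg m_nn by simp
    moreover have "(\<integral>x. x\<^sup>2 * \<rho> x \<partial>lborel) \<ge> 0" by (simp add: rho_nonneg)
    moreover have "(\<integral>x. \<rho> x * m x \<partial>lborel) \<ge> 0" by (simp add: rho_nonneg m_nn)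
    ultimately show ?thesis by simp
  qed
  have Ia: "integrable lborel (\<lambda>x. \<rho> x * (x + F x * dt)\<^sup>2)"
  proof (rule Bochner_Integration.integrable_bound[OF Im])
    show "(\<lambda>x. \<rho> x * (x + F x * dt)\<^sup>2) \<in> borel_measurable lborel" by measurable
    show "AE x in lborel. norm (\<rho> x * (x + F x * dt)\<^sup>2) \<le> norm (\<rho> x * m x)"
    proof (rule AE_I2)
      fix x
      have "\<rho> x * (x + F x * dt)\<^sup>2 \<le> \<rho> x * m x"
        unfolding m_def using rho_nonneg[of x] dt_pos by (intro mult_left_mono) auto
      then show "norm (\<rho> x * (x + F x * dt)\<^sup>2) \<le> norm (\<rho> x * m x)"
        using rho_nonneg[of x] by simp
    qed
  qed
  have Ig: "integrable lborel (\<lambda>x. \<rho> x * (G x)\<^sup>2)"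
  proof (rule Bochner_Integration.integrable_bound[OF integrable_divide[OF Im, of dt]])
    show "(\<lambda>x. \<rho> x * (G x)\<^sup>2) \<in> borel_measurable lborel" by measurable
    show "AE x in lborel. norm (\<rho> x * (G x)\<^sup>2) \<le> norm (\<rho> x * m x / dt)"
    proof (rule AE_I2)
      fix x
      have "\<rho> x * (G x)\<^sup>2 * dt \<le> \<rho> x * m x"
        unfolding m_def using rho_nonneg[of x] by (simp add: algebra_simps mult_left_mono)
      then have "\<rho> x * (G x)\<^sup>2 \<le> \<rho> x * m x / dt" using dt_pos by (simp add: pos_le_divide_eq)
      then show "norm (\<rho> x * (G x)\<^sup>2) \<le> norm (\<rho> x * m x / dt)"
        using rho_nonneg[of x] m_nn[of x] dt_pos by simp
    qed
  qed
  have Im2: "integrable lborel (\<lambda>x. \<rho> x * x\<^sup>2)" using moment2 by (simp add: mult.commute)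
  have IF: "integrable lborel (\<lambda>x. \<rho> x * (F x)\<^sup>2)"
  proof (rule Bochner_Integration.integrable_bound[OF integrable_divide[OF Bochner_Integration.integrable_add[OF integrable_mult_right[OF Ia, of 2] integrable_mult_right[OF Im2, of 2]], of "dt\<^sup>2"]])
    show "(\<lambda>x. \<rho> x * (F x)\<^sup>2) \<in> borel_measurable lborel" by measurable
    show "AE x in lborel. norm (\<rho> x * (F x)\<^sup>2) \<le> norm ((2 * (\<rho> x * (x + F x * dt)\<^sup>2) + 2 * (\<rho> x * x\<^sup>2)) / dt\<^sup>2)"
    proof (rule AE_I2)
      fix x
      have q: "(F x * dt)\<^sup>2 \<le> 2 * (x + F x * dt)\<^sup>2 + 2 * x\<^sup>2"
      proof -
        have "2 * (x + F x * dt)\<^sup>2 + 2 * x\<^sup>2 - (F x * dt)\<^sup>2 = (2*x + F x * dt)\<^sup>2"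
          by (simp add: power2_eq_square algebra_simps)
        moreover have "(2*x + F x * dt)\<^sup>2 \<ge> 0" by simp
        ultimately show ?thesis by linarith
      qed
      have "\<rho> x * (F x)\<^sup>2 * dt\<^sup>2 \<le> 2 * (\<rho> x * (x + F x * dt)\<^sup>2) + 2 * (\<rho> x * x\<^sup>2)"
        using mult_left_mono[OF q rho_nonneg[of x]] by (simp add: algebra_simps power_mult_distrib)
      then have "\<rho> x * (F x)\<^sup>2 \<le> (2 * (\<rho> x * (x + F x * dt)\<^sup>2) + 2 * (\<rho> x * x\<^sup>2)) / dt\<^sup>2"
        using dt_pos by (simp add: pos_le_divide_eq)
      then show "norm (\<rho> x * (F x)\<^sup>2) \<le> norm ((2 * (\<rho> x * (x + F x * dt)\<^sup>2) + 2 * (\<rho> x * x\<^sup>2)) / dt\<^sup>2)"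
        using rho_nonneg[of x] by simp
    qed
  qed
  have IxF: "integrable lborel (\<lambda>x. \<rho> x * (x * F x))"
  proof (rule Bochner_Integration.integrable_bound[OF Bochner_Integration.integrable_add[OF Im2 IF]])
    show "(\<lambda>x. \<rho> x * (x * F x)) \<in> borel_measurable lborel" by measurable
    show "AE x in lborel. norm (\<rho> x * (x * F x)) \<le> norm (\<rho> x * x\<^sup>2 + \<rho> x * (F x)\<^sup>2)"
    proof (rule AE_I2)
      fix x
      have q: "\<bar>x * F x\<bar> \<le> x\<^sup>2 + (F x)\<^sup>2"
      proof -
        have "x\<^sup>2 + (F x)\<^sup>2 - 2 * (x * F x) = (x - F x)\<^sup>2" "x\<^sup>2 + (F x)\<^sup>2 + 2 * (x * F x) = (x + F x)\<^sup>2"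
          by (simp_all add: power2_eq_square algebra_simps)
        moreover have "(x - F x)\<^sup>2 \<ge> 0" "(x + F x)\<^sup>2 \<ge> 0" by simp_all
        ultimately show ?thesis by linarith
      qed
      have "\<bar>\<rho> x * (x * F x)\<bar> \<le> \<rho> x * x\<^sup>2 + \<rho> x * (F x)\<^sup>2"
        using mult_left_mono[OF q rho_nonneg[of x]] rho_nonneg[of x] by (simp add: abs_mult algebra_simps)
      then show "norm (\<rho> x * (x * F x)) \<le> norm (\<rho> x * x\<^sup>2 + \<rho> x * (F x)\<^sup>2)"
        using rho_nonneg[of x] by simp
    qed
  qed
  have e1: "(\<lambda>x. \<rho> x * m x) = (\<lambda>x. \<rho> x * x\<^sup>2 + (2 * dt) * (\<rho> x * (x * F x)) + dt\<^sup>2 * (\<rho> x * (F x)\<^sup>2) + dt * (\<rho> x * (G x)\<^sup>2))"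
    by (auto simp: fun_eq_iff m_def power2_eq_square algebra_simps)
  have e2: "(\<integral>x. \<rho> x * m x \<partial>lborel) = (\<integral>x. \<rho> x * x\<^sup>2 \<partial>lborel) + (2 * dt) * (\<integral>x. \<rho> x * (x * F x) \<partial>lborel)
       + dt\<^sup>2 * (\<integral>x. \<rho> x * (F x)\<^sup>2 \<partial>lborel) + dt * (\<integral>x. \<rho> x * (G x)\<^sup>2 \<partial>lborel)"
    unfolding e1 using Im2 IxF IF Ig by simp
  have e3: "(\<lambda>x. \<rho> x * (2 * x * F x + (G x)\<^sup>2)) = (\<lambda>x. 2 * (\<rho> x * (x * F x)) + \<rho> x * (G x)\<^sup>2)"
    by (auto simp: fun_eq_iff algebra_simps)
  have e4: "(\<integral>x. \<rho> x * (2 * x * F x + (G x)\<^sup>2) \<partial>lborel) = 2 * (\<integral>x. \<rho> x * (x * F x) \<partial>lborel) + (\<integral>x. \<rho> x * (G x)\<^sup>2 \<partial>lborel)"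
    unfolding e3 using IxF Ig by simp
  have e5: "(\<integral>x. x\<^sup>2 * \<rho> x \<partial>lborel) = (\<integral>x. \<rho> x * x\<^sup>2 \<partial>lborel)"
    by (simp add: mult.commute)
  show ?thesis using eqI e2 e4 e5 by (simp add: algebra_simps)
qed

end
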